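(* Let $A$ be a nonempty finite set with $|A|=n$ and $\Sigma\in\mathbb{R}$. The map $\varphi$ defined by $\varphi(d)(x,y)=d(x,\cdot)+d(y,\cdot)-d(x,y)-d(\cdot,\cdot)+\Sigma/n$ is a bijection from the set of metrics on $A$ onto the set of $\Sigma$-proximities on $A$, and its inverse is the map $\psi$ given by $\psi(\sigma)(x,y)=\tfrac12(\sigma(x,x)+\sigma(y,y))-\sigma(x,y)$.
   Context: A metric on $A$ is a function $d:A^2\to\mathbb{R}$ such that for all $x,y,z\in A$: $d(x,y)=0$ iff $x=y$, and $d(x,y)+d(x,z)-d(y,z)\ge 0$. Notation: $d(x,\cdot)=\frac1n\sum_{t\in A}d(x,t)$, $d(\cdot,\cdot)=\frac1{n^2}\sum_{s,t\in A}d(s,t)$. A function $\sigma:A^2\to\mathbb{R}$ is a $\Sigma$-proximity on $A$ if for all $x,y,z\in A$: (1) $\sum_{t\in A}\sigma(x,t)=\Sigma$; (2) $\sigma(x,y)+\sigma(x,z)-\sigma(y,z)\le\sigma(x,x)$, with strict inequality whenever $z=y$ and $x\ne y$. *)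

theory Defs
  imports Complex_Main
begin

text \<open>Functions on A^2 are modelled as curried real-valued functions that are
  extensional on A x A (value undefined outside A x A), so that equality of
  functions means equality on A x A.\<close>

definition ext2 :: "'a set \<Rightarrow> ('a \<Rightarrow> 'a \<Rightarrow> real) \<Rightarrow> bool" where
  "ext2 A f \<longleftrightarrow> (\<forall>x y. (x \<notin> A \<or> y \<notin> A) \<longrightarrow> f x y = undefined)"

definition is_metric :: "'a set \<Rightarrow> ('a \<Rightarrow> 'a \<Rightarrow> real) \<Rightarrow> bool" where
  "is_metric A d \<longleftrightarrow> ext2 A d \<and>
     (\<forall>x\<in>A. \<forall>y\<in>A. d x y = 0 \<longleftrightarrow> x = y) \<and>
     (\<forall>x\<in>A. \<forall>y\<in>A. \<forall>z\<in>A. d x y + d x z - d y z \<ge> 0)"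

definition is_proximity :: "'a set \<Rightarrow> real \<Rightarrow> ('a \<Rightarrow> 'a \<Rightarrow> real) \<Rightarrow> bool" where
  "is_proximity A \<Sigma> \<sigma> \<longleftrightarrow> ext2 A \<sigma> \<and>
     (\<forall>x\<in>A. (\<Sum>t\<in>A. \<sigma> x t) = \<Sigma>) \<and>
     (\<forall>x\<in>A. \<forall>y\<in>A. \<forall>z\<in>A. \<sigma> x y + \<sigma> x z - \<sigma> y z \<le> \<sigma> x x) \<and>
     (\<forall>x\<in>A. \<forall>y\<in>A. x \<noteq> y \<longrightarrow> \<sigma> x y + \<sigma> x y - \<sigma> y y < \<sigma> x x)"

definition row_mean :: "'a set \<Rightarrow> ('a \<Rightarrow> 'a \<Rightarrow> real) \<Rightarrow> 'a \<Rightarrow> real" where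
  "row_mean A d x = (\<Sum>t\<in>A. d x t) / real (card A)"

definition total_mean :: "'a set \<Rightarrow> ('a \<Rightarrow> 'a \<Rightarrow> real) \<Rightarrow> real" where
  "total_mean A d = (\<Sum>s\<in>A. \<Sum>t\<in>A. d s t) / (real (card A))^2"

definition phi :: "'a set \<Rightarrow> real \<Rightarrow> ('a \<Rightarrow> 'a \<Rightarrow> real) \<Rightarrow> ('a \<Rightarrow> 'a \<Rightarrow> real)" where
  "phi A \<Sigma> d = (\<lambda>x y. if x \<in> A \<and> y \<in> A then
      row_mean A d x + row_mean A d y - d x y - total_mean A d + \<Sigma> / real (card A)
    else undefined)"

definition psi :: "'a set \<Rightarrow> ('a \<Rightarrow> 'a \<Rightarrow> real) \<Rightarrow> ('a \<Rightarrow> 'a \<Rightarrow> real)" where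
  "psi A \<sigma> = (\<lambda>x y. if x \<in> A \<and> y \<in> A then
      (\<sigma> x x + \<sigma> y y) / 2 - \<sigma> x y
    else undefined)"

end

theory Submission
  imports Defs
begin

lemma metric_sym:
  assumes "is_metric A d" "x \<in> A" "y \<in> A" shows "d x y = d y x"
proof -
  have "d x y + d x x - d y x \<ge> 0" "d y x + d y y - d x y \<ge> 0"
    using assms unfolding is_metric_def by blast+
  moreover have "d x x = 0" "d y y = 0" using assms unfolding is_metric_def by blast+
  ultimately show ?thesis by linarith
qed

lemma prox_sym:
  assumes "is_proximity A S \<sigma>" "x \<in> A" "y \<in> A" shows "\<sigma> x y = \<sigma> y x"
proof -
  have "\<sigma> x y + \<sigma> x x - \<sigma> y x \<le> \<sigma> x x" "\<sigma> y x + \<sigma> y y - \<sigma> x y \<le> \<sigma> y y"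
    using assms unfolding is_proximity_def by blast+
  then show ?thesis by linarith
qed

lemma phi_rowsum:
  assumes "finite A" "A \<noteq> {}" "x \<in> A"
  shows "(\<Sum>t\<in>A. phi A S d x t) = S"
proof -
  define n where "n = real (card A)"
  have n0: "n > 0" using assms by (simp add: n_def card_gt_0_iff)
  have e1: "(\<Sum>t\<in>A. phi A S d x t) = (\<Sum>t\<in>A. row_mean A d x + row_mean A d t - d x t - total_mean A d + S / n)"
    using assms(3) by (intro sum.cong) (auto simp: phi_def n_def)
  have e2: "(\<Sum>t\<in>A. row_mean A d x + row_mean A d t - d x t - total_mean A d + S / n) = n * row_mean A d x + (\<Sum>t\<in>A. row_mean A d t) - (\<Sum>t\<in>A. d x t) - n * total_mean A d + n * (S / n)"
    by (simp add: sum.distrib sum_subtractf n_def)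
  have e3: "(\<Sum>t\<in>A. row_mean A d t) = (\<Sum>s\<in>A. \<Sum>t\<in>A. d s t) / n"
    by (simp add: row_mean_def sum_divide_distrib n_def)
  have e4: "n * row_mean A d x = (\<Sum>t\<in>A. d x t)"
    using n0 by (simp add: row_mean_def n_def[symmetric])
  have e5: "n * total_mean A d = (\<Sum>s\<in>A. \<Sum>t\<in>A. d s t) / n"
    using n0 by (simp add: total_mean_def n_def[symmetric] power2_eq_square)
  have e6: "n * (S / n) = S" using n0 by simp
  show ?thesis unfolding e1 e2 e3 e4 e5 e6 by simp
qed

lemma phi_in: "x \<in> A \<Longrightarrow> y \<in> A \<Longrightarrow> phi A S d x y =
  row_mean A d x + row_mean A d y - d x y - total_mean A d + S / real (card A)"
  by (simp add: phi_def)

lemma psi_in: "x \<in> A \<Longrightarrow> y \<in> A \<Longrightarrow> psi A s x y = (s x x + s y y) / 2 - s x y"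
  by (simp add: psi_def)

lemma aux1: "dxx = 0 \<Longrightarrow> dyy = 0 \<Longrightarrow> ((rx + rx - dxx - T + c) + (ry + ry - dyy - T + c)) / 2 - (rx + ry - dxy - T + c) = (dxy::real)"
  by (simp add: field_simps)

lemma L1:
  assumes "finite A" "A \<noteq> {}" "is_metric A d"
  shows "is_proximity A S (phi A S d)"
proof -
  have tri: "\<And>x y z. x\<in>A \<Longrightarrow> y\<in>A \<Longrightarrow> z\<in>A \<Longrightarrow> d x y + d x z - d y z \<ge> 0"
   and z: "\<And>x y. x\<in>A \<Longrightarrow> y\<in>A \<Longrightarrow> d x y = 0 \<longleftrightarrow> x = y"
    using assms(3) unfolding is_metric_def by auto
  show ?thesis unfolding is_proximity_def
  proof (intro conjI ballI impI)
    show "ext2 A (phi A S d)" by (auto simp: ext2_def phi_def)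
    show "\<And>x. x \<in> A \<Longrightarrow> (\<Sum>t\<in>A. phi A S d x t) = S" using phi_rowsum[OF assms(1,2)] by simp
    fix x y assume xy: "x \<in> A" "y \<in> A"
    { fix z assume zA: "z \<in> A"
      have "d x y + d x z - d y z \<ge> 0" using tri[OF xy zA] .
      moreover have "d x x = 0" using z[OF xy(1) xy(1)] by simp
      moreover have "d z y = d y z" using metric_sym[OF assms(3) zA xy(2)] .
      ultimately show "phi A S d x y + phi A S d x z - phi A S d y z \<le> phi A S d x x"
        unfolding phi_in[OF xy] phi_in[OF xy(1) zA] phi_in[OF xy(2) zA] phi_in[OF xy(1) xy(1)]
        by linarith }
    assume "x \<noteq> y"
    then have "d x y \<noteq> 0" using z[OF xy] by simp
    moreover have "d x y + d x y - d y y \<ge> 0" using tri[OF xy xy(2)] .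
    moreover have "d y y = 0" using z[OF xy(2) xy(2)] by simp
    moreover have "d x x = 0" using z[OF xy(1) xy(1)] by simp
    ultimately have "d x y > 0" by linarith
    then show "phi A S d x y + phi A S d x y - phi A S d y y < phi A S d x x"
      unfolding phi_in[OF xy] phi_in[OF xy(2) xy(2)] phi_in[OF xy(1) xy(1)]
      using \<open>d x x = 0\<close> \<open>d y y = 0\<close> by linarith
  qed
qed

lemma L2:
  assumes "is_metric A d"
  shows "psi A (phi A S d) = d"
proof (intro ext)
  fix x y
  have e: "ext2 A d" and z: "\<And>x. x\<in>A \<Longrightarrow> d x x = 0" using assms unfolding is_metric_def by auto
  show "psi A (phi A S d) x y = d x y"
  proof (cases "x \<in> A \<and> y \<in> A")
    case True
    then have xy: "x \<in> A" "y \<in> A" by auto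
    have "d x x = 0" "d y y = 0" using z xy by auto
    moreover have "d y x = d x y" using metric_sym[OF assms xy(2) xy(1)] .
    ultimately show ?thesis using xy
      unfolding psi_in[OF xy] phi_in[OF xy] phi_in[OF xy(2) xy(2)] phi_in[OF xy(1) xy(1)]
      by (intro aux1)
  next
    case False
    then show ?thesis using e by (auto simp: psi_def ext2_def)
  qed
qed

lemma L3:
  assumes "is_proximity A S \<sigma>"
  shows "is_metric A (psi A \<sigma>)"
proof -
  have tri: "\<And>x y z. x\<in>A \<Longrightarrow> y\<in>A \<Longrightarrow> z\<in>A \<Longrightarrow> \<sigma> x y + \<sigma> x z - \<sigma> y z \<le> \<sigma> x x"
   and st: "\<And>x y. x\<in>A \<Longrightarrow> y\<in>A \<Longrightarrow> x \<noteq> y \<Longrightarrow> \<sigma> x y + \<sigma> x y - \<sigma> y y < \<sigma> x x"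
    using assms unfolding is_proximity_def by blast+
  show ?thesis unfolding is_metric_def
  proof (intro conjI ballI)
    show "ext2 A (psi A \<sigma>)" by (auto simp: ext2_def psi_def)
    fix x y assume xy: "x \<in> A" "y \<in> A"
    show "psi A \<sigma> x y = 0 \<longleftrightarrow> x = y"
    proof
      assume h: "psi A \<sigma> x y = 0"
      show "x = y"
      proof (rule ccontr)
        assume "x \<noteq> y"
        then show False using st[OF xy] h xy by (simp add: psi_def)
      qed
    qed (simp add: psi_def xy)
    fix z assume "z \<in> A"
    then show "psi A \<sigma> x y + psi A \<sigma> x z - psi A \<sigma> y z \<ge> 0"
      using tri[OF xy \<open>z\<in>A\<close>] xy by (simp add: psi_def field_simps)
  qed
qed

lemma L4:
  assumes "finite A" "A \<noteq> {}" "is_proximity A S \<sigma>"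
  shows "phi A S (psi A \<sigma>) = \<sigma>"
proof (intro ext)
  fix x y
  define n where "n = real (card A)"
  have n0: "n > 0" using assms by (simp add: n_def card_gt_0_iff)
  have e: "ext2 A \<sigma>" and rs: "\<And>x. x\<in>A \<Longrightarrow> (\<Sum>t\<in>A. \<sigma> x t) = S"
    using assms(3) unfolding is_proximity_def by auto
  define D where "D = (\<Sum>t\<in>A. \<sigma> t t)"
  have R: "(\<Sum>t\<in>A. psi A \<sigma> x t) = n * \<sigma> x x / 2 + D / 2 - S" if "x \<in> A" for x
  proof -
    have "(\<Sum>t\<in>A. psi A \<sigma> x t) = (\<Sum>t\<in>A. \<sigma> x x / 2 + \<sigma> t t / 2 - \<sigma> x t)"
      using that by (intro sum.cong) (auto simp: psi_def)
    also have "\<dots> = n * \<sigma> x x / 2 + D / 2 - S"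
      using rs[OF that] by (simp add: sum.distrib sum_subtractf n_def D_def sum_divide_distrib)
    finally show ?thesis .
  qed
  have RM: "row_mean A (psi A \<sigma>) x = \<sigma> x x / 2 + D / (2*n) - S / n" if "x \<in> A" for x
    unfolding row_mean_def n_def[symmetric] R[OF that] using n0 by (simp add: field_simps)
  have T1: "(\<Sum>s\<in>A. \<Sum>t\<in>A. psi A \<sigma> s t) = (\<Sum>s\<in>A. n * \<sigma> s s / 2 + D / 2 - S)"
    using R by (intro sum.cong) auto
  have T2: "(\<Sum>s\<in>A. n * \<sigma> s s / 2 + D / 2 - S) = n * D - n * S"
    by (simp add: sum.distrib sum_subtractf n_def D_def sum_distrib_left[symmetric] sum_divide_distrib[symmetric])
  have T3: "(n * D - n * S) / n^2 = D / n - S / n"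
    using n0 by (simp add: power2_eq_square diff_divide_distrib)
  have TM: "total_mean A (psi A \<sigma>) = D / n - S / n"
    unfolding total_mean_def n_def[symmetric] T1 T2 T3 ..
  show "phi A S (psi A \<sigma>) x y = \<sigma> x y"
  proof (cases "x \<in> A \<and> y \<in> A")
    case True
    have P1: "phi A S (psi A \<sigma>) x y = (\<sigma> x x / 2 + D / (2*n) - S / n) + (\<sigma> y y / 2 + D / (2*n) - S / n)
       - ((\<sigma> x x + \<sigma> y y) / 2 - \<sigma> x y) - (D / n - S / n) + S / n"
      using True RM[of x] RM[of y] TM by (simp add: phi_def psi_def n_def[symmetric])
    have P2: "(\<sigma> x x / 2 + D / (2*n) - S / n) + (\<sigma> y y / 2 + D / (2*n) - S / n)
       - ((\<sigma> x x + \<sigma> y y) / 2 - \<sigma> x y) - (D / n - S / n) + S / n = \<sigma> x y"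
      by (simp add: add_divide_distrib diff_divide_distrib)
    show ?thesis unfolding P1 P2 ..
  next
    case False
    then show ?thesis using e by (auto simp: phi_def ext2_def)
  qed
qed

theorem theorem1:
  fixes A :: "'a set" and \<Sigma> :: real
  assumes "finite A" and "A \<noteq> {}"
  shows "bij_betw (phi A \<Sigma>) {d. is_metric A d} {\<sigma>. is_proximity A \<Sigma> \<sigma>}
    \<and> (\<forall>\<sigma>. is_proximity A \<Sigma> \<sigma> \<longrightarrow> is_metric A (psi A \<sigma>) \<and> phi A \<Sigma> (psi A \<sigma>) = \<sigma>)
    \<and> (\<forall>d. is_metric A d \<longrightarrow> psi A (phi A \<Sigma> d) = d)"
proof (intro conjI allI impI)
  show "bij_betw (phi A \<Sigma>) {d. is_metric A d} {\<sigma>. is_proximity A \<Sigma> \<sigma>}"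
  proof (rule bij_betw_byWitness[where f'="psi A"])
    show "\<forall>a\<in>{d. is_metric A d}. psi A (phi A \<Sigma> a) = a" using L2 by blast
    show "\<forall>a'\<in>{\<sigma>. is_proximity A \<Sigma> \<sigma>}. phi A \<Sigma> (psi A a') = a'"
      using L4[OF assms] by simp
    show "phi A \<Sigma> ` {d. is_metric A d} \<subseteq> {\<sigma>. is_proximity A \<Sigma> \<sigma>}"
      using L1[OF assms] by auto
    show "psi A ` {\<sigma>. is_proximity A \<Sigma> \<sigma>} \<subseteq> {d. is_metric A d}"
      using L3 by auto
  qed
next
  fix \<sigma> assume h: "is_proximity A \<Sigma> \<sigma>"
  show "is_metric A (psi A \<sigma>)" using L3[OF h] .
  show "phi A \<Sigma> (psi A \<sigma>) = \<sigma>" using L4[OF assms h] .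
next
  fix d assume "is_metric A d"
  then show "psi A (phi A \<Sigma> d) = d" by (rule L2)
qed

end
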